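(* Let $A,B$, the generalized cosines $c_1,\dots,c_n$, $H$, $S$, $P_S$, $P=\psi_d(S)$ and $\Delta_{\min}$ be as described in the context, for an interval $[c_{\min},c_{\max}]\subset[0,1]$ and series degree $d$. Then $$|\mathrm{tr}(P_S)-\mathrm{tr}(P)|\le\frac{n\pi^6}{2(d+2)^3\Delta_{\min}^4}.$$
   Context: $A\in\mathbb{R}^{m_1\times n}$, $B\in\mathbb{R}^{m_2\times n}$, $m_1+m_2\ge n$, $[A^T,B^T]^T$ of full column rank. GSVD: $U^TAX=\Sigma_A$, $V^TBX=\Sigma_B$ with $X$ nonsingular, $U,V$ orthogonal, $\Sigma_A^T\Sigma_A=\mathrm{diag}(c_1^2,\dots,c_n^2)$, $\Sigma_B^T\Sigma_B=\mathrm{diag}(s_1^2,\dots,s_n^2)$, $c_i,s_i\ge0$, $c_i^2+s_i^2=1$ (values $c_i=0$ and $c_i=1$ correspond to $\mathcal N(A)$ and $\mathcal N(B)$). $H=A^TA+B^TB$, $X^THX=I$, $S=H^{-1}(A^TA-B^TB)=X(2\Sigma_A^T\Sigma_A-I)X^{-1}$. $P_S=X_{in}X_{in}^TH+\frac12X_eX_e^TH$, where $X_{in}$ (resp. $X_e$) consists of the columns $x_i$ of $X$ with $c_i\in(c_{\min},c_{\max})$ (resp. $c_i\in\{c_{\min},c_{\max}\}$). With $l(z)=2z^2-1$, $\alpha=\arccos(l(c_{\min}))$, $\beta=\arccos(l(c_{\max}))$, $\eta_0=(\alpha-\beta)/\pi$, $\eta_j=2(\sin(j\alpha)-\sin(j\beta))/(j\pi)$,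 $\rho_{j,d}=\frac{(d+2-j)\sin\frac{\pi}{d+2}\cos\frac{j\pi}{d+2}+\cos\frac{\pi}{d+2}\sin\frac{j\pi}{d+2}}{(d+2)\sin\frac{\pi}{d+2}}$, let $\psi_d(x)=\sum_{j=0}^d\rho_{j,d}\eta_jT_j(x)$ ($T_j$ Chebyshev polynomials) and $P=\psi_d(S)$. $\Delta_{\min}=\min\{\Delta_{il},\Delta_{ir},\Delta_{ol},\Delta_{or}\}$ with $\Delta_{il}=|\arccos(l(c_{il}))-\alpha|$, $\Delta_{ir}=|\arccos(l(c_{ir}))-\beta|$, $\Delta_{ol}=|\arccos(l(c_{ol}))-\alpha|$, $\Delta_{or}=|\arccos(l(c_{or}))-\beta|$, where $c_{il},c_{ir}$ (resp. $c_{ol},c_{or}$) are the values among $c_1,\dots,c_n$ closest to $c_{\min}$ and $c_{\max}$ inside (resp. outside) $[c_{\min},c_{\max}]$. *)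

theory Defs
  imports "HOL-Analysis.Analysis"
begin

definition outer :: "real^'n \<Rightarrow> real^'n^'n" where
  "outer x = (\<chi> a b. x$a * x$b)"

fun cheb_mat :: "nat \<Rightarrow> real^'n^'n \<Rightarrow> real^'n^'n" where
  "cheb_mat 0 S = mat 1"
| "cheb_mat (Suc 0) S = S"
| "cheb_mat (Suc (Suc k)) S = 2 *\<^sub>R (S ** cheb_mat (Suc k) S) - cheb_mat k S"

definition lmap :: "real \<Rightarrow> real" where "lmap z = 2 * z^2 - 1"

definition alpha :: "real \<Rightarrow> real" where "alpha cmin = arccos (lmap cmin)"
definition beta :: "real \<Rightarrow> real" where "beta cmax = arccos (lmap cmax)"

definition eta :: "real \<Rightarrow> real \<Rightarrow> nat \<Rightarrow> real" where
  "eta cmin cmax j = (if j = 0 then (alpha cmin - beta cmax) / pi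
     else 2 * (sin (real j * alpha cmin) - sin (real j * beta cmax)) / (real j * pi))"

definition rho :: "nat \<Rightarrow> nat \<Rightarrow> real" where
  "rho j d = ((real d + 2 - real j) * sin (pi / (real d + 2)) * cos (real j * pi / (real d + 2))
              + cos (pi / (real d + 2)) * sin (real j * pi / (real d + 2)))
             / ((real d + 2) * sin (pi / (real d + 2)))"

definition psi_mat :: "real \<Rightarrow> real \<Rightarrow> nat \<Rightarrow> real^'n^'n \<Rightarrow> real^'n^'n" where
  "psi_mat cmin cmax d S = (\<Sum>j = 0..d. (rho j d * eta cmin cmax j) *\<^sub>R cheb_mat j S)"

definition PS_mat :: "real^'n^'n \<Rightarrow> real^'n^'n \<Rightarrow> ('n \<Rightarrow> real) \<Rightarrow> real \<Rightarrow> real \<Rightarrow> real^'n^'n" where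
  "PS_mat X H c cmin cmax =
     (\<Sum>i\<in>{i. cmin < c i \<and> c i < cmax}. outer (column i X) ** H)
     + (1/2) *\<^sub>R (\<Sum>i\<in>{i. c i = cmin \<or> c i = cmax}. outer (column i X) ** H)"

text \<open>Values among c_1..c_n inside / left of / right of [cmin,cmax];
  c_il = closest inside value to cmin (= minimum), c_ir = closest inside value to cmax (= maximum),
  c_ol = closest value below cmin (= maximum), c_or = closest value above cmax (= minimum).
  Gaps whose defining value does not exist are omitted from the minimum.\<close>
definition delta_set :: "('n::finite \<Rightarrow> real) \<Rightarrow> real \<Rightarrow> real \<Rightarrow> real set" where
  "delta_set c cmin cmax =
     (let I = {v \<in> range c. cmin \<le> v \<and> v \<le> cmax};
          L = {v \<in> range c. v < cmin};
          R = {v \<in> range c. cmax < v}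
      in (if I \<noteq> {} then {\<bar>arccos (lmap (Min I)) - alpha cmin\<bar>,
                            \<bar>arccos (lmap (Max I)) - beta cmax\<bar>} else {})
         \<union> (if L \<noteq> {} then {\<bar>arccos (lmap (Max L)) - alpha cmin\<bar>} else {})
         \<union> (if R \<noteq> {} then {\<bar>arccos (lmap (Min R)) - beta cmax\<bar>} else {}))"

definition delta_min :: "('n::finite \<Rightarrow> real) \<Rightarrow> real \<Rightarrow> real \<Rightarrow> real" where
  "delta_min c cmin cmax = Min (delta_set c cmin cmax)"

end

theory Submission
  imports Defs
begin


lemma cos_lb: "1 - x^2/2 \<le> cos (x::real)"
proof -
  have c: "cos x = 1 - 2*(sin(x/2))^2" using cos_double_sin[of "x/2"] by simp
  have "(sin(x/2))^2 \<le> (x/2)^2" using abs_sin_x_le_abs_x[of "x/2"] abs_le_square_iff by blast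
  then show ?thesis using c by (simp add: power_divide)
qed

lemma sin_lb: assumes "0 \<le> (x::real)" shows "x - x^3/6 \<le> sin x"
proof -
  have "(\<lambda>t. sin t - t + t^3/6) 0 \<le> (\<lambda>t. sin t - t + t^3/6) x"
  proof (rule DERIV_nonneg_imp_nondecreasing[OF assms])
    fix t :: real assume "0 \<le> t" "t \<le> x"
    show "\<exists>y. ((\<lambda>t. sin t - t + t^3/6) has_real_derivative y) (at t) \<and> y \<ge> 0"
      apply (rule exI[of _ "cos t - 1 + t^2/2"])
      apply (intro conjI)
       apply (rule derivative_eq_intros refl | simp)+
      using cos_lb[of t] by simp
  qed
  then show ?thesis by simp
qed

lemma jordan: assumes "0 \<le> (y::real)" "y \<le> pi/2" shows "2*y/pi \<le> sin y"
proof (cases "y^2 \<le> 2")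
  case True
  have "y*(2/3) \<le> y - y^3/6"
  proof -
    have "y^3 = y*y^2" by (simp add: power3_eq_cube power2_eq_square)
    then have "y - y^3/6 = y*(1 - y^2/6)" by (simp add: algebra_simps)
    moreover have "1 - y^2/6 \<ge> 2/3" using True by simp
    ultimately show ?thesis using assms(1) by (metis mult_left_mono)
  qed
  moreover have "2*y/pi \<le> y*(2/3)"
  proof -
    have "y*3 \<le> y*pi" using assms(1) pi_gt3 by (intro mult_left_mono) auto
    then show ?thesis using pi_gt3 by (simp add: field_simps)
  qed
  ultimately show ?thesis using sin_lb[OF assms(1)] by linarith
next
  case False
  define z where "z = pi/2 - y"
  have z0: "0 \<le> z" using assms z_def by simp
  have "y > 1.4" proof (rule ccontr)
    assume "\<not> y > 1.4" then have "y \<le> 1.4" by simp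
    then have "y^2 \<le> 1.4^2" using assms(1) power_mono by blast
    then show False using False by (simp add: power2_eq_square)
  qed
  then have "z \<le> 1" using z_def pi_approx by simp
  then have "pi*z \<le> 4*1" using pi_approx z0 by (intro mult_mono) auto
  then have z1: "z \<le> 4/pi" using pi_gt3 by (simp add: field_simps)
  have "sin y = cos z" using z_def by (simp add: cos_diff)
  moreover have "1 - z^2/2 \<ge> 1 - 2*z/pi"
  proof -
    have "z^2 = z*z" by (simp add: power2_eq_square)
    moreover have "z*z \<le> z*(4/pi)" using z0 z1 mult_left_mono by blast
    ultimately show ?thesis by (simp add: mult.commute)
  qed
  moreover have "1 - 2*z/pi = 2*y/pi" using z_def by (simp add: field_simps)
  ultimately show ?thesis using cos_lb[of z] by linarith
qed

lemma one_minus_cos_lb: assumes "0 \<le> t" "t \<le> pi" shows "2*t^2/pi^2 \<le> 1 - cos t"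
proof -
  have c: "cos t = 1 - 2*(sin(t/2))^2" using cos_double_sin[of "t/2"] by simp
  have j: "2*(t/2)/pi \<le> sin (t/2)" using jordan[of "t/2"] assms by simp
  have "0 \<le> 2*(t/2)/pi" using assms by simp
  then have "(2*(t/2)/pi)^2 \<le> (sin(t/2))^2" using j power_mono by blast
  then have "t^2 \<le> pi^2 * (sin(t/2))^2" by (simp add: power_divide field_simps)
  moreover have "cos t * pi^2 = pi^2 - 2*(pi^2*(sin(t/2))^2)" by (simp add: c algebra_simps)
  ultimately have "cos t * pi^2 + 2*t^2 \<le> pi^2" by linarith
  then show ?thesis by (simp add: field_simps)
qed



definition epsd :: "nat \<Rightarrow> real" where "epsd d = pi / (real d + 2)"
definition aa :: "nat \<Rightarrow> nat \<Rightarrow> real" where "aa d k = sin ((real k + 1) * epsd d)"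

lemma prod_sin: "2 * sin (u::real) * sin v = cos (v - u) - cos (v + u)"
  by (simp add: cos_diff cos_add)

lemma sin_tel: "sin ((x::real) + e) - sin (x - e) = 2 * cos x * sin e"
  by (simp add: sin_add sin_diff)

lemma tele:
  assumes "sin e \<noteq> 0"
  shows "(\<Sum>k<N. sin ((real k + 1) * e) * sin ((real k + 1 + real j) * e))
       = real N * cos (real j * e) / 2 - (sin ((2 * real N + real j + 1) * e) - sin ((real j + 1) * e)) / (4 * sin e)"
proof (induction N)
  case 0 then show ?case by simp
next
  case (Suc N)
  have p: "2 * sin ((real N + 1) * e) * sin ((real N + 1 + real j) * e)
        = cos (real j * e) - cos ((2 * real N + real j + 2) * e)"
    using prod_sin[of "(real N + 1) * e" "(real N + 1 + real j) * e"]
    by (simp add: algebra_simps)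
  have t: "sin ((2 * real N + real j + 3) * e) - sin ((2 * real N + real j + 1) * e)
        = 2 * cos ((2 * real N + real j + 2) * e) * sin e"
    using sin_tel[of "(2 * real N + real j + 2) * e" e] by (simp add: algebra_simps)
  define P where "P = sin ((real N + 1) * e) * sin ((real N + 1 + real j) * e)"
  define C where "C = cos ((2 * real N + real j + 2) * e)"
  define S1 where "S1 = sin ((2 * real N + real j + 1) * e)"
  define S3 where "S3 = sin ((2 * real N + real j + 3) * e)"
  define Sj where "Sj = sin ((real j + 1) * e)"
  define cj where "cj = cos (real j * e)"
  have p': "2 * P = cj - C" using p unfolding P_def C_def cj_def by simp
  have t': "S3 - S1 = 2 * C * sin e" using t unfolding S1_def S3_def C_def by simp
  have "(\<Sum>k<Suc N. sin ((real k + 1) * e) * sin ((real k + 1 + real j) * e))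
      = real N * cj / 2 - (S1 - Sj) / (4 * sin e) + P"
    using Suc unfolding P_def S1_def Sj_def cj_def by simp
  also have "\<dots> = real N * cj / 2 + cj / 2 - (S3 - Sj) / (4 * sin e)"
  proof -
    have e3: "S3 = S1 + 2 * C * sin e" using t' by simp
    have eP: "P = (cj - C) / 2" using p' by simp
    show ?thesis unfolding e3 eP using assms by (simp add: field_simps)
  qed
  also have "\<dots> = real (Suc N) * cos (real j * e) / 2 - (sin ((2 * real (Suc N) + real j + 1) * e) - sin ((real j + 1) * e)) / (4 * sin e)"
  proof -
    have e1: "(2 * real (Suc N) + real j + 1) * e = (2 * real N + real j + 3) * e" by simp
    show ?thesis unfolding e1 S3_def Sj_def cj_def by (simp add: field_simps)
  qed
  finally show ?case .
qed

lemma epsd_pos: "0 < epsd d" unfolding epsd_def by simp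
lemma epsd_le: "epsd d \<le> pi/2" unfolding epsd_def by (simp add: field_simps)
lemma sin_epsd_pos: "0 < sin (epsd d)"
  using epsd_pos[of d] epsd_le[of d] by (intro sin_gt_zero) auto
lemma M_epsd: "(real d + 2) * epsd d = pi" unfolding epsd_def by simp

lemma rho_conv:
  assumes "j \<le> d"
  shows "rho j d = (2/(real d + 2)) * (\<Sum>k\<le>d-j. aa d k * aa d (k+j))"
proof -
  define e where "e = epsd d"
  define s where "s = sin e"
  define c where "c = cos e"
  define M where "M = real d + 2"
  have s0: "s > 0" using sin_epsd_pos e_def s_def by simp
  have Me: "M * e = pi" using M_epsd e_def M_def by simp
  have sum1: "(\<Sum>k\<le>d-j. aa d k * aa d (k+j)) = (\<Sum>k<Suc (d-j). sin ((real k + 1) * e) * sin ((real k + 1 + real j) * e))"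
    unfolding aa_def e_def lessThan_Suc_atMost by (simp add: algebra_simps)
  have rN: "real (Suc (d-j)) = M - 1 - real j" using assms M_def by (simp add: of_nat_diff)
  have arg: "(2 * real (Suc (d-j)) + real j + 1) * e = 2*pi - (real j + 1) * e"
    unfolding rN using Me by (simp add: algebra_simps)
  have sj1: "sin ((real j + 1) * e) = sin (real j * e) * c + cos (real j * e) * s"
    unfolding c_def s_def by (simp add: algebra_simps sin_add)
  have T: "(\<Sum>k<Suc (d-j). sin ((real k + 1) * e) * sin ((real k + 1 + real j) * e))
       = real (Suc (d-j)) * cos (real j * e) / 2 - (sin ((2 * real (Suc (d-j)) + real j + 1) * e) - sin ((real j + 1) * e)) / (4 * sin e)"
    by (rule tele) (use s0 s_def in auto)
  have sarg: "sin ((2 * real (Suc (d-j)) + real j + 1) * e) = - sin ((real j + 1) * e)"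
    unfolding arg by (simp add: sin_diff)
  have "(\<Sum>k\<le>d-j. aa d k * aa d (k+j)) = (M - 1 - real j) * cos (real j * e) / 2 + 2 * sin ((real j + 1) * e) / (4 * s)"
    unfolding sum1 T sarg unfolding rN s_def by simp
  also have "\<dots> = ((M - real j) * s * cos (real j * e) + c * sin (real j * e)) / (2 * s)"
    unfolding sj1 using s0 by (simp add: field_simps)
  finally have S: "(\<Sum>k\<le>d-j. aa d k * aa d (k+j)) = ((M - real j) * s * cos (real j * e) + c * sin (real j * e)) / (2 * s)" .
  have r: "rho j d = ((M - real j) * s * cos (real j * e) + c * sin (real j * e)) / (M * s)"
    unfolding rho_def M_def s_def c_def e_def epsd_def by (simp add: algebra_simps)
  have M0: "M > 0" using M_def by simp
  show ?thesis unfolding S r M_def[symmetric] using s0 M0 by (simp add: field_simps)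
qed

lemma rho0: "rho 0 d = 1"
  unfolding rho_def using sin_epsd_pos[of d] by (simp add: epsd_def)



lemma conv_reindex:
  "(\<Sum>j=1..Suc n. cos (real j * t) * a (Suc n - j)) = (\<Sum>k\<le>n. a k * cos (real (Suc n - k) * t))"
  by (rule sum.reindex_bij_witness[of _ "\<lambda>k. Suc n - k" "\<lambda>j. Suc n - j"]) auto

lemma conv_R:
  fixes a :: "nat \<Rightarrow> real"
  shows "(\<Sum>j=1..Suc n. cos (real j * t) * (\<Sum>k\<le>Suc n - j. a k * a (k+j)))
    = (\<Sum>j=1..n. cos (real j * t) * (\<Sum>k\<le>n - j. a k * a (k+j)))
      + a (Suc n) * (\<Sum>j=1..Suc n. cos (real j * t) * a (Suc n - j))"
proof -
  have "(\<Sum>j=1..Suc n. cos (real j * t) * (\<Sum>k\<le>Suc n - j. a k * a (k+j)))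
      = (\<Sum>j=1..n. cos (real j * t) * (\<Sum>k\<le>Suc n - j. a k * a (k+j))) + cos (real (Suc n) * t) * (a 0 * a (Suc n))"
    by (simp add: sum.cl_ivl_Suc)
  also have "(\<Sum>j=1..n. cos (real j * t) * (\<Sum>k\<le>Suc n - j. a k * a (k+j)))
      = (\<Sum>j=1..n. cos (real j * t) * (\<Sum>k\<le>n - j. a k * a (k+j)) + a (Suc n) * (cos (real j * t) * a (Suc n - j)))"
  proof (rule sum.cong[OF refl])
    fix j assume "j \<in> {1..n}"
    then have j: "1 \<le> j" "j \<le> n" by auto
    then have e: "Suc n - j = Suc (n - j)" by simp
    have e2: "Suc (n - j) + j = Suc n" using j by simp
    show "cos (real j * t) * (\<Sum>k\<le>Suc n - j. a k * a (k+j))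
        = cos (real j * t) * (\<Sum>k\<le>n - j. a k * a (k+j)) + a (Suc n) * (cos (real j * t) * a (Suc n - j))"
      unfolding e sum.atMost_Suc e2 by (simp add: algebra_simps)
  qed
  also have "\<dots> = (\<Sum>j=1..n. cos (real j * t) * (\<Sum>k\<le>n - j. a k * a (k+j))) + a (Suc n) * (\<Sum>j=1..n. cos (real j * t) * a (Suc n - j))"
    by (simp add: sum.distrib sum_distrib_left)
  finally show ?thesis by (simp add: sum.cl_ivl_Suc algebra_simps)
qed

lemma sq_aux: "((C::real) + A*p)^2 + (S + A*q)^2 = C^2+S^2+A^2*(q^2+p^2) + 2*A*(C*p+S*q)"
  by (simp add: power2_eq_square algebra_simps)

lemma conv:
  fixes a :: "nat \<Rightarrow> real"
  shows "(\<Sum>k\<le>n. a k * cos (real k * t))^2 + (\<Sum>k\<le>n. a k * sin (real k * t))^2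
       = (\<Sum>k\<le>n. (a k)^2) + 2 * (\<Sum>j=1..n. cos (real j * t) * (\<Sum>k\<le>n-j. a k * a (k+j)))"
proof (induction n)
  case 0 then show ?case by (simp add: power_mult_distrib)
next
  case (Suc n)
  define C where "C = (\<Sum>k\<le>n. a k * cos (real k * t))"
  define S where "S = (\<Sum>k\<le>n. a k * sin (real k * t))"
  define x where "x = real (Suc n) * t"
  define A where "A = a (Suc n)"
  have cs: "C * cos x + S * sin x = (\<Sum>k\<le>n. a k * cos (real (Suc n - k) * t))"
  proof -
    have "C * cos x + S * sin x = (\<Sum>k\<le>n. a k * (cos x * cos (real k * t) + sin x * sin (real k * t)))"
      unfolding C_def S_def by (simp add: sum_distrib_left sum_distrib_right sum.distrib algebra_simps)
    also have "\<dots> = (\<Sum>k\<le>n. a k * cos (real (Suc n - k) * t))"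
    proof (rule sum.cong[OF refl])
      fix k assume "k \<in> {..n}"
      then have "real (Suc n - k) * t = x - real k * t" unfolding x_def by (simp add: of_nat_diff algebra_simps)
      then show "a k * (cos x * cos (real k * t) + sin x * sin (real k * t)) = a k * cos (real (Suc n - k) * t)"
        by (simp add: cos_diff)
    qed
    finally show ?thesis .
  qed
  have "(\<Sum>k\<le>Suc n. a k * cos (real k * t))^2 + (\<Sum>k\<le>Suc n. a k * sin (real k * t))^2
      = (C + A * cos x)^2 + (S + A * sin x)^2"
    unfolding C_def S_def A_def x_def by simp
  also have "\<dots> = C^2 + S^2 + A^2 * ((sin x)^2 + (cos x)^2) + 2 * A * (C * cos x + S * sin x)"
    by (rule sq_aux)
  also have "\<dots> = C^2 + S^2 + A^2 + 2 * A * (\<Sum>j=1..Suc n. cos (real j * t) * a (Suc n - j))"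
    by (simp only: cs conv_reindex sin_cos_squared_add mult_1_right)
  also have "\<dots> = (\<Sum>k\<le>Suc n. (a k)^2) + 2 * (\<Sum>j=1..Suc n. cos (real j * t) * (\<Sum>k\<le>Suc n-j. a k * a (k+j)))"
    unfolding conv_R C_def S_def Suc A_def by (simp add: algebra_simps)
  finally show ?case .
qed



lemma rec_poly:
  fixes b :: "nat \<Rightarrow> real" and c :: real and z :: complex
  assumes rec: "\<And>k. b (k+2) = 2*c*b (k+1) - b k"
  shows "(z^2 - 2*c*z + 1) * (\<Sum>k\<le>N. of_real (b k) * z^k)
       = of_real (b 0) + of_real (b 1 - 2*c*b 0) * z - of_real (b (N+1)) * z^(N+1) + of_real (b N) * z^(N+2)"
proof (induction N)
  case 0 then show ?case by (simp add: power2_eq_square algebra_simps)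
next
  case (Suc N)
  have r: "b (Suc N + 1) = 2*c*b (N+1) - b N" using rec[of N] by simp
  have "(z^2 - 2*c*z + 1) * (\<Sum>k\<le>Suc N. of_real (b k) * z^k)
      = (z^2 - 2*c*z + 1) * (\<Sum>k\<le>N. of_real (b k) * z^k) + (z^2 - 2*c*z + 1) * (of_real (b (Suc N)) * z^(Suc N))"
    by (simp add: algebra_simps)
  also have "\<dots> = of_real (b 0) + of_real (b 1 - 2*c*b 0) * z - of_real (b (Suc N + 1)) * z^(Suc N + 1) + of_real (b (Suc N)) * z^(Suc N + 2)"
    unfolding Suc r by (simp add: power2_eq_square algebra_simps)
  finally show ?case .
qed

definition Cf :: "nat \<Rightarrow> real \<Rightarrow> real" where "Cf d t = (\<Sum>k\<le>d. aa d k * cos (real k * t))"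
definition Sf :: "nat \<Rightarrow> real \<Rightarrow> real" where "Sf d t = (\<Sum>k\<le>d. aa d k * sin (real k * t))"
definition Kf :: "nat \<Rightarrow> real \<Rightarrow> real" where
  "Kf d t = rho 0 d + 2 * (\<Sum>j=1..d. rho j d * cos (real j * t))"
definition Gf :: "nat \<Rightarrow> real \<Rightarrow> real" where
  "Gf d t = (rho 0 d * t + 2 * (\<Sum>j=1..d. rho j d * sin (real j * t) / real j)) / (2*pi)"

lemma Kf_conv: "Kf d t = (2/(real d + 2)) * ((Cf d t)^2 + (Sf d t)^2)"
proof -
  have M: "real d + 2 > 0" by simp
  have h0: "(\<Sum>k\<le>d. (aa d k)^2) = (real d + 2)/2 * rho 0 d"
    using rho_conv[of 0 d] M by (simp add: power2_eq_square field_simps)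
  have hj: "(\<Sum>j=1..d. cos (real j * t) * (\<Sum>k\<le>d-j. aa d k * aa d (k+j)))
       = (\<Sum>j=1..d. (real d + 2)/2 * (rho j d * cos (real j * t)))"
  proof (rule sum.cong[OF refl])
    fix j assume "j \<in> {1..d}"
    then have "j \<le> d" by simp
    then have "(\<Sum>k\<le>d-j. aa d k * aa d (k+j)) = (real d + 2)/2 * rho j d"
      using rho_conv[of j d] M by (simp add: field_simps)
    then show "cos (real j * t) * (\<Sum>k\<le>d-j. aa d k * aa d (k+j)) = (real d + 2)/2 * (rho j d * cos (real j * t))"
      by simp
  qed
  have "(Cf d t)^2 + (Sf d t)^2 = (real d + 2)/2 * rho 0 d + 2 * ((real d + 2)/2 * (\<Sum>j=1..d. rho j d * cos (real j * t)))"
    unfolding Cf_def Sf_def conv h0 hj by (simp add: sum_distrib_left)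
  then show ?thesis unfolding Kf_def using M by (simp add: field_simps)
qed

lemma Kf_nonneg: "0 \<le> Kf d t"
  unfolding Kf_conv by simp

lemma CS_bound: "((Cf d t)^2 + (Sf d t)^2) * (cos t - cos (epsd d))^2 \<le> (sin (epsd d))^2"
proof -
  define e where "e = epsd d"
  define c where "c = cos e"
  define s where "s = sin e"
  define z where "z = cis t"
  define w where "w = (\<Sum>k\<le>d. of_real (aa d k) * z^k)"
  define b where "b = (\<lambda>k::nat. sin (real k * e))"
  have s0: "s > 0" using sin_epsd_pos s_def e_def by simp
  have Me: "(real d + 2) * e = pi" using M_epsd e_def by simp
  have rec: "\<And>k. b (k+2) = 2*c*b (k+1) - b k"
  proof -
    fix k
    have "sin ((real k + 1) * e + e) + sin ((real k + 1) * e - e) = 2 * sin ((real k + 1) * e) * cos e"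
      by (simp add: sin_add sin_diff)
    moreover have "(real k + 1) * e + e = real (k+2) * e" by (simp add: algebra_simps)
    moreover have "(real k + 1) * e - e = real k * e" by (simp add: algebra_simps)
    ultimately show "b (k+2) = 2*c*b (k+1) - b k" unfolding b_def c_def by (simp add: algebra_simps)
  qed
  have P: "(z^2 - 2*c*z + 1) * (\<Sum>k\<le>d+2. of_real (b k) * z^k)
       = of_real (b 0) + of_real (b 1 - 2*c*b 0) * z - of_real (b (d+2+1)) * z^(d+2+1) + of_real (b (d+2)) * z^(d+2+2)"
    by (rule rec_poly[OF rec])
  have b0: "b 0 = 0" unfolding b_def by simp
  have b1: "b 1 = s" unfolding b_def s_def by simp
  have bM: "b (d+2) = 0" unfolding b_def using Me by (simp add: algebra_simps)
  have bM1: "b (d+2+1) = - s" unfolding b_def s_def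
  proof -
    have "real (d+2+1) * e = pi + e" using Me by (simp add: algebra_simps)
    then show "sin (real (d+2+1) * e) = - sin e" by simp
  qed
  have sumz: "(\<Sum>k\<le>d+2. of_real (b k) * z^k) = z * w"
  proof -
    have "(\<Sum>k\<le>Suc (Suc d). of_real (b k) * z^k) = (\<Sum>k\<le>Suc d. of_real (b (Suc k)) * z^(Suc k))"
      unfolding sum.atMost_Suc_shift using b0 by simp
    also have "\<dots> = (\<Sum>k\<le>d. of_real (b (Suc k)) * z^(Suc k))"
      using bM by simp
    also have "\<dots> = z * w" unfolding w_def sum_distrib_left b_def aa_def e_def
      by (rule sum.cong) (auto simp: algebra_simps)
    finally show ?thesis by simp
  qed
  have z1: "cmod z = 1" unfolding z_def by simp
  have z0: "z \<noteq> 0" using z1 by auto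
  have zc: "z * cnj z = 1" unfolding z_def by (simp add: cis_cnj cis_mult)
  have quad: "z^2 - 2*c*z + 1 = z * of_real (2 * (cos t - c))"
  proof -
    have "z^2 - 2*c*z + 1 = z * (z + cnj z - 2*c)" using zc by (simp add: power2_eq_square algebra_simps)
    also have "z + cnj z = of_real (2 * cos t)" unfolding complex_add_cnj z_def by simp
    finally show ?thesis by (simp add: algebra_simps)
  qed
  have "z * (of_real (2 * (cos t - c)) * (z * w)) = z * (of_real s * (1 + z^(d+2)))"
    using P unfolding sumz quad b0 b1 bM bM1 by (simp add: algebra_simps power_add)
  then have E: "of_real (2 * (cos t - c)) * (z * w) = of_real s * (1 + z^(d+2))" using z0 by simp
  have n1: "cmod (of_real (2 * (cos t - c)) * (z * w)) = 2 * \<bar>cos t - c\<bar> * cmod w"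
  proof -
    have "cmod (of_real (2 * (cos t - c)) * (z * w)) = \<bar>2 * (cos t - c)\<bar> * cmod w"
      by (simp only: norm_mult norm_of_real z1 mult_1_left)
    moreover have "\<bar>2 * (cos t - c)\<bar> = 2 * \<bar>cos t - c\<bar>" by (simp only: abs_mult abs_numeral)
    ultimately show ?thesis by simp
  qed
  have "cmod (1 + z^(d+2)) \<le> 2"
    using norm_triangle_ineq[of 1 "z^(d+2)"] z1 by (simp add: norm_power norm_mult)
  then have n2: "cmod (of_real s * (1 + z^(d+2))) \<le> s * 2"
    unfolding norm_mult norm_of_real using s0 by (simp add: mult_left_mono)
  have "\<bar>cos t - c\<bar> * cmod w \<le> s" using n1 n2 E by simp
  then have "(\<bar>cos t - c\<bar> * cmod w)^2 \<le> s^2"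
    by (intro power_mono) auto
  moreover have "(cmod w)^2 = (Cf d t)^2 + (Sf d t)^2"
  proof -
    have "w = (\<Sum>k\<le>d. of_real (aa d k) * cis (real k * t))" unfolding w_def z_def by (rule sum.cong[OF refl]) (simp only: Complex.DeMoivre)
    then have "Re w = Cf d t" "Im w = Sf d t" unfolding Cf_def Sf_def by (simp_all add: Re_sum Im_sum)
    then show ?thesis by (simp add: cmod_power2)
  qed
  ultimately show ?thesis unfolding c_def e_def s_def by (simp add: power_mult_distrib mult.commute)
qed

lemma Kf_bound: "Kf d t * (cos t - cos (epsd d))^2 \<le> 2 * (sin (epsd d))^2 / (real d + 2)"
proof -
  have M: "real d + 2 > 0" by simp
  have "Kf d t * (cos t - cos (epsd d))^2 = (2/(real d + 2)) * (((Cf d t)^2 + (Sf d t)^2) * (cos t - cos (epsd d))^2)"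
    unfolding Kf_conv by simp
  also have "\<dots> \<le> (2/(real d + 2)) * (sin (epsd d))^2"
    using CS_bound M by (intro mult_left_mono) auto
  finally show ?thesis by simp
qed

lemma Gf_deriv: "(Gf d has_real_derivative Kf d t / (2*pi)) (at t)"
proof -
  have D1: "((\<lambda>t. \<Sum>j=1..d. rho j d * sin (real j * t) / real j) has_real_derivative (\<Sum>j=1..d. rho j d * cos (real j * t))) (at t)"
  proof (rule DERIV_sum)
    fix j assume "j \<in> {1..d}" then have j0: "real j \<noteq> 0" by auto
    show "((\<lambda>x. rho j d * sin (real j * x) / real j) has_real_derivative rho j d * cos (real j * t)) (at t)"
      apply (rule derivative_eq_intros refl)+
      using j0 by (auto simp: divide_simps)
  qed
  have "((\<lambda>t. (rho 0 d * t + 2 * (\<Sum>j=1..d. rho j d * sin (real j * t) / real j)) / (2*pi))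
     has_real_derivative (rho 0 d * 1 + 2 * (\<Sum>j=1..d. rho j d * cos (real j * t))) / (2*pi)) (at t)"
    by (intro DERIV_cdivide DERIV_add DERIV_cmult D1 DERIV_ident)
  then show ?thesis unfolding Gf_def Kf_def by simp
qed

lemma Gf_mono: "a \<le> b \<Longrightarrow> Gf d a \<le> Gf d b"
  by (rule DERIV_nonneg_imp_nondecreasing) (use Gf_deriv Kf_nonneg in \<open>auto intro!: exI\<close>)

lemma Gf_periodic: "Gf d (t + 2*pi) = Gf d t + 1"
proof -
  have "\<And>j. sin (real j * (t + 2*pi)) = sin (real j * t)"
  proof -
    fix j
    have "real j * (t + 2*pi) = real j * t + 2 * real j * pi" by (simp add: algebra_simps)
    then show "sin (real j * (t + 2*pi)) = sin (real j * t)" by (simp add: sin_add)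
  qed
  then show ?thesis unfolding Gf_def rho0 by (simp add: field_simps)
qed

lemma Gf_odd: "Gf d (-t) = - Gf d t"
  unfolding Gf_def by (simp add: sum_negf) (simp add: field_simps)

lemma Gf_0: "Gf d 0 = 0" unfolding Gf_def by simp

lemma Gf_pi: "Gf d pi = 1/2"
  unfolding Gf_def rho0 by simp



lemma q_bound: assumes "0 < (q::real)" "q^6 < 16/729" shows "q^2 \<le> 7/24"
proof (rule ccontr)
  assume "\<not> q^2 \<le> 7/24"
  then have "(7/24)^3 < (q^2)^3" by (intro power_strict_mono) auto
  also have "(q^2)^3 = q^6" by (simp add: power_mult[symmetric])
  finally have "(7/24)^3 < q^6" .
  moreover have "(7/24::real)^3 = 343/13824" by (simp add: power_divide)
  ultimately show False using assms(2) by simp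
qed

lemma r_bound:
  assumes d1: "1 \<le> d" and D0: "0 < D" and Dpi: "D \<le> pi"
    and big: "pi^6 < 2 * (real d + 2)^3 * D^4"
  shows "(1 - cos (epsd d)) / (1 - cos D) \<le> 21/50"
proof -
  define e where "e = epsd d"
  have e0: "0 < e" using epsd_pos e_def by simp
  have cD: "2*D^2/pi^2 \<le> 1 - cos D" using one_minus_cos_lb D0 Dpi by simp
  have "0 < 2*D^2/pi^2" using D0 by simp
  with cD have cD0: "0 < 1 - cos D" by linarith
  show ?thesis
  proof (cases "2 \<le> D")
    case True
    have "e \<le> pi/3" unfolding e_def epsd_def using d1 by (simp add: field_simps)
    then have "cos (pi/3) \<le> cos e" using e0 by (intro cos_monotone_0_pi_le) auto
    then have c1: "1 - cos e \<le> 1/2" using cos_60 by simp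
    have "cos D \<le> cos (2::real)" using True Dpi by (intro cos_monotone_0_pi_le) auto
    moreover have "cos (2::real) = 1 - 2 * (sin 1)^2" using cos_double_sin[of 1] by simp
    moreover have "5/6 \<le> sin (1::real)" using sin_lb[of 1] by simp
    then have "(5/6)^2 \<le> (sin (1::real))^2" by (intro power_mono) auto
    ultimately have c2: "25/18 \<le> 1 - cos D" by (simp add: power_divide)
    have "(1 - cos e) / (1 - cos D) \<le> (1/2) / (25/18)"
      using c1 c2 cD0 by (intro frac_le) auto
    also have "\<dots> \<le> 21/50" by simp
    finally show ?thesis unfolding e_def .
  next
    case False
    have DD: "D^2 \<le> 4"
    proof -
      have "D^2 \<le> 2^2" using False D0 by (intro power_mono) auto
      then show ?thesis by simp
    qed
    have c1: "1 - cos e \<le> e^2/2" using cos_lb[of e] by simp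
    have hD: "D/2 - (D/2)^3/6 \<le> sin (D/2)" using sin_lb[of "D/2"] D0 by simp
    have "(D/2) * (5/6) \<le> D/2 - (D/2)^3/6"
    proof -
      have "(D/2)^2 \<le> 1" using DD by (simp add: power_divide)
      then have "5/6 \<le> 1 - (D/2)^2/6" by simp
      then have "(D/2) * (5/6) \<le> (D/2) * (1 - (D/2)^2/6)" using D0 by (intro mult_left_mono) auto
      also have "\<dots> = D/2 - (D/2)^3/6" by (simp add: power2_eq_square power3_eq_cube algebra_simps)
      finally show ?thesis .
    qed
    with hD have "(D/2) * (5/6) \<le> sin (D/2)" by linarith
    then have "((D/2) * (5/6))^2 \<le> (sin (D/2))^2" using D0 by (intro power_mono) auto
    moreover have "cos D = 1 - 2 * (sin (D/2))^2" using cos_double_sin[of "D/2"] by simp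
    ultimately have c2: "25/72 * D^2 \<le> 1 - cos D" by (simp add: power_mult_distrib power_divide)
    have M: "real d + 2 = pi / e" unfolding e_def epsd_def by simp
    have "pi^6 < 2 * (pi/e)^3 * D^4" using big M by simp
    then have "pi^6 * e^3 < 2 * pi^3 * D^4" using e0 by (simp add: power_divide field_simps)
    moreover have "pi^3 * (pi^3 * e^3) = pi^6 * e^3" by (simp add: mult.assoc[symmetric] power_add[symmetric])
    moreover have "pi^3 * (2 * D^4) = 2 * pi^3 * D^4" by simp
    ultimately have "pi^3 * (pi^3 * e^3) < pi^3 * (2 * D^4)" by simp
    moreover have "(0::real) < pi^3" by simp
    ultimately have "pi^3 * e^3 < 2 * D^4" using mult_less_cancel_left_pos[of "pi^3" "pi^3*e^3" "2*D^4"] by blast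
    then have e3: "e^3 < 2 * D^4 / pi^3" using pi_gt_zero by (simp add: field_simps mult.commute)
    have "(e^3)^2 < (2 * D^4 / pi^3)^2" using e3 e0 by (intro power_strict_mono) auto
    then have e6: "e^6 < 4 * D^8 / pi^6" by (simp add: power_mult[symmetric] power_divide power_mult_distrib)
    define q where "q = e / D"
    have q0: "0 < q" using e0 D0 q_def by simp
    have "q^6 = e^6 / D^6" unfolding q_def by (simp add: power_divide)
    also have "\<dots> < (4 * D^8 / pi^6) / D^6" using e6 D0 by (intro divide_strict_right_mono) auto
    also have "\<dots> = 4 * D^2 / pi^6" using D0 by (simp add: field_simps power_add[symmetric] numeral_eq_Suc)
    also have "\<dots> \<le> 16 / 729"
    proof -
      note DD
      moreover have "729 \<le> pi^6"
      proof -
        have "(3::real)^6 \<le> pi^6" using pi_gt3 by (intro power_mono) auto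
        then show ?thesis by simp
      qed
      ultimately show ?thesis using pi_gt3 by (simp add: field_simps)
    qed
    finally have "q^2 \<le> 7/24" using q_bound q0 by blast
    then have "e^2 \<le> 7/24 * D^2" unfolding q_def using D0 by (simp add: power_divide field_simps)
    with c1 have "1 - cos e \<le> 7/48 * D^2" by simp
    then have "(1 - cos e) / (1 - cos D) \<le> (7/48 * D^2) / (25/72 * D^2)"
      using c2 D0 by (intro frac_le) auto
    also have "\<dots> = 21/50" using D0 by simp
    finally show ?thesis unfolding e_def .
  qed
qed



lemma d0_bound: assumes "0 < D" "D \<le> pi" shows "1 - D/pi \<le> pi^6 / (16 * D^4)"
proof -
  define u where "u = D/pi"
  have u0: "0 < u" "u \<le> 1" using assms unfolding u_def by (auto simp: field_simps)
  have "0 \<le> (2*u - 1)^2" by simp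
  then have a: "4*u*(1-u) \<le> 1" by (simp add: power2_eq_square algebra_simps)
  have u3: "u^3 \<le> 1" using u0 by (simp add: power_le_one)
  have "16 * u^4 * (1-u) = 4*u^3 * (4*u*(1-u))" by (simp add: power_numeral_reduce algebra_simps)
  also have "\<dots> \<le> 4*u^3 * 1" using a u0 by (intro mult_left_mono) auto
  also have "\<dots> \<le> 4" using u3 by simp
  also have "\<dots> \<le> pi^2"
  proof -
    have "(2::real)^2 \<le> pi^2" using pi_ge_two by (intro power_mono) auto
    then show ?thesis by simp
  qed
  finally have k: "16 * u^4 * (1-u) \<le> pi^2" .
  have D: "D = u * pi" unfolding u_def by simp
  have "(1 - u) * (16 * D^4) = 16 * u^4 * (1-u) * pi^4" unfolding D by (simp add: power_mult_distrib algebra_simps)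
  also have "\<dots> \<le> pi^2 * pi^4" using k by (intro mult_right_mono) auto
  also have "\<dots> = pi^6" by (simp add: power_add[symmetric])
  finally have "(1 - u) * (16 * D^4) \<le> pi^6" .
  then show ?thesis unfolding u_def using assms by (simp add: field_simps)
qed

lemma Kb:
  assumes D0: "0 < D" and Dpi: "D \<le> pi" and t: "D \<le> t" "t \<le> pi"
    and rr: "(1 - cos (epsd d)) / (1 - cos D) \<le> 21/50"
  shows "Kf d t \<le> (sin (epsd d))^2 * pi^4 / (2 * (real d + 2) * (1 - (1 - cos (epsd d)) / (1 - cos D))^2) / t^4"
proof -
  define c where "c = cos (epsd d)"
  define s where "s = sin (epsd d)"
  define M where "M = real d + 2"
  define r where "r = (1 - c) / (1 - cos D)"
  have M0: "M > 0" unfolding M_def by simp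
  have t0: "t > 0" using D0 t by simp
  have cD: "2*D^2/pi^2 \<le> 1 - cos D" using one_minus_cos_lb D0 Dpi by simp
  have "0 < 2*D^2/pi^2" using D0 by simp
  with cD have cD0: "0 < 1 - cos D" by linarith
  have c1: "0 \<le> 1 - c" unfolding c_def by simp
  have r0: "0 \<le> r" unfolding r_def using c1 cD0 by simp
  have r1: "r \<le> 21/50" using rr unfolding r_def c_def .
  have ct: "cos t \<le> cos D" using D0 t by (intro cos_monotone_0_pi_le) auto
  have eq: "1 - c = r * (1 - cos D)" unfolding r_def using cD0 by simp
  have "1 - c \<le> r * (1 - cos t)" unfolding eq using r0 ct by (intro mult_left_mono) auto
  then have X: "(1 - r) * (1 - cos t) \<le> c - cos t" by (simp add: algebra_simps)
  have ct2: "2*t^2/pi^2 \<le> 1 - cos t" using one_minus_cos_lb t0 t by simp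
  define Y where "Y = (1 - r) * (2*t^2/pi^2)"
  have Y0: "0 < Y" unfolding Y_def using r1 t0 by simp
  have "Y \<le> (1 - r) * (1 - cos t)" unfolding Y_def using ct2 r1 by (intro mult_left_mono) auto
  with X have YX: "Y \<le> c - cos t" by simp
  then have "Y^2 \<le> (c - cos t)^2" using Y0 by (intro power_mono) auto
  also have "\<dots> = (cos t - c)^2" by (simp add: power2_commute)
  finally have Y2: "Y^2 \<le> (cos t - c)^2" .
  have "Kf d t * Y^2 \<le> Kf d t * (cos t - c)^2" using Y2 Kf_nonneg by (intro mult_left_mono) auto
  also have "\<dots> \<le> 2 * s^2 / M" using Kf_bound[of d t] unfolding c_def s_def M_def .
  finally have "Kf d t * Y^2 \<le> 2 * s^2 / M" .
  then have "Kf d t \<le> (2 * s^2 / M) / Y^2" using Y0 by (subst pos_le_divide_eq) auto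
  also have "(2 * s^2 / M) / Y^2 = s^2 * pi^4 / (2 * M * (1 - r)^2) / t^4"
  proof -
    have Ysq: "Y^2 = (1-r)^2 * (4 * t^4) / pi^4"
      unfolding Y_def power2_eq_square power4_eq_xxxx by (simp add: field_simps)
    have "(1-r)^2 > 0" using r1 by simp
    then show ?thesis unfolding Ysq using t0 M0 by (simp add: field_simps)
  qed
  finally show ?thesis unfolding r_def c_def s_def M_def .
qed

lemma tail_bound:
  assumes D0: "0 < D" and Dpi: "D \<le> pi"
  shows "1 - 2 * Gf d D \<le> pi^6 / (2 * (real d + 2)^3 * D^4)"
proof -
  define M where "M = real d + 2"
  have M0: "M > 0" unfolding M_def by simp
  have G0: "0 \<le> Gf d D" using Gf_mono[of 0 D d] Gf_0 D0 by simp
  show ?thesis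
  proof (cases "pi^6 < 2 * (real d + 2)^3 * D^4")
    case False
    then have "1 \<le> pi^6 / (2 * (real d + 2)^3 * D^4)" using D0 by (simp add: field_simps)
    then show ?thesis using G0 by linarith
  next
    case big: True
    show ?thesis
    proof (cases "d = 0")
      case True
      have "Gf d D = D / (2*pi)" unfolding Gf_def rho0 True by simp
      then have "1 - 2 * Gf d D = 1 - D/pi" by simp
      also have "\<dots> \<le> pi^6 / (16 * D^4)" by (rule d0_bound[OF D0 Dpi])
      finally show ?thesis using True by simp
    next
      case False
      then have d1: "1 \<le> d" by simp
      define r where "r = (1 - cos (epsd d)) / (1 - cos D)"
      define s where "s = sin (epsd d)"
      define C where "C = s^2 * pi^4 / (2 * M * (1 - r)^2)"
      have r1: "r \<le> 21/50" unfolding r_def by (rule r_bound[OF d1 D0 Dpi big])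
      have C0: "0 \<le> C" unfolding C_def using M0 by simp
      have Kb': "\<And>t. D \<le> t \<Longrightarrow> t \<le> pi \<Longrightarrow> Kf d t \<le> C / t^4"
        using Kb[OF D0 Dpi _ _ r1[unfolded r_def]] unfolding C_def r_def s_def M_def by blast
      define h where "h = (\<lambda>t. 2 * Gf d t + C/(3*pi) / t^3)"
      have "h pi \<le> h D"
      proof (rule DERIV_nonpos_imp_nonincreasing[OF Dpi])
        fix t assume t: "D \<le> t" "t \<le> pi"
        have t0: "t \<noteq> 0" using t D0 by simp
        have "(h has_real_derivative (2 * (Kf d t / (2*pi)) + C/(3*pi) * (- (real 3 * t^2) / (t^3)^2))) (at t)"
          unfolding h_def using t0
          by (intro DERIV_add DERIV_cmult Gf_deriv DERIV_cdivide) (auto intro!: derivative_eq_intros)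
        moreover have "2 * (Kf d t / (2*pi)) + C/(3*pi) * (- (real 3 * t^2) / (t^3)^2) = (Kf d t - C / t^4) / pi"
          using t0 by (simp add: field_simps power2_eq_square power3_eq_cube power4_eq_xxxx)
        moreover have "(Kf d t - C / t^4) / pi \<le> 0" using Kb'[OF t] by (simp add: divide_nonpos_pos)
        ultimately show "\<exists>y. (h has_real_derivative y) (at t) \<and> y \<le> 0" by auto
      qed
      then have "1 + C/(3*pi)/pi^3 \<le> 2 * Gf d D + C/(3*pi)/D^3" unfolding h_def Gf_pi by simp
      moreover have "0 \<le> C/(3*pi)/pi^3" using C0 by simp
      ultimately have E: "1 - 2 * Gf d D \<le> C/(3*pi)/D^3" by linarith
      define R where "R = (1 - r)^2"
      have R3: "1/3 \<le> R"
      proof -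
        have "(29/50)^2 \<le> (1-r)^2" using r1 by (intro power_mono) auto
        then show ?thesis unfolding R_def by (simp add: power2_eq_square)
      qed
      have s0: "0 \<le> s" unfolding s_def using sin_epsd_pos less_imp_le by blast
      have sM: "s * M \<le> pi"
      proof -
        have "s \<le> epsd d" unfolding s_def using epsd_pos less_imp_le sin_x_le_x by blast
        then show ?thesis unfolding epsd_def M_def using M0 by (simp add: field_simps M_def)
      qed
      have key: "s^2 * M^2 * D \<le> 3 * pi^3 * R"
      proof -
        have "(s*M)^2 \<le> pi^2" using sM s0 M0 by (intro power_mono) auto
        then have "s^2 * M^2 * D \<le> pi^2 * pi" using D0 Dpi by (intro mult_mono) (auto simp: power_mult_distrib)
        also have "\<dots> = pi^3 * 1" by (simp add: power2_eq_square power3_eq_cube)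
        also have "\<dots> \<le> pi^3 * (3 * R)" using R3 by (intro mult_left_mono) auto
        finally show ?thesis by simp
      qed
      define Q where "Q = pi^3 / (6 * M^3 * R * D^4)"
      have Q0: "0 \<le> Q" unfolding Q_def using M0 R3 D0 by simp
      have R0: "R \<noteq> 0" using R3 by auto
      have "C/(3*pi)/D^3 = (s^2 * M^2 * D) * Q"
        unfolding C_def Q_def R_def[symmetric] using M0 R0 D0 by (simp add: field_simps power2_eq_square power3_eq_cube power4_eq_xxxx)
      also have "\<dots> \<le> (3 * pi^3 * R) * Q" using key Q0 by (intro mult_right_mono) auto
      also have "\<dots> = pi^6 / (2 * M^3 * D^4)"
        unfolding Q_def using M0 R0 D0 by (simp add: field_simps power_add[symmetric])
      finally show ?thesis using E unfolding M_def by simp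
    qed
  qed
qed



lemma point_err:
  fixes G :: "real \<Rightarrow> real"
  assumes mono: "\<And>a b. a \<le> b \<Longrightarrow> G a \<le> G b" and per: "\<And>t. G (t + 2*pi) = G t + 1"
    and th: "0 \<le> th" "th \<le> pi" and ab: "0 \<le> b" "b \<le> a" "a \<le> pi"
    and D0: "0 < D" and ga: "D \<le> \<bar>th - a\<bar>" and gb: "D \<le> \<bar>th - b\<bar>"
  shows "\<bar>(if b < th \<and> th < a then 1 else 0) - (G (th + a) - G (th - a) - G (th + b) + G (th - b))\<bar>
         \<le> G (2*pi - D) - G D"
proof (cases "b < th \<and> th < a")
  case True
  have p: "G (th - a + 2*pi) = G (th - a) + 1" by (rule per)
  have g1: "D \<le> th - b" "th - a + 2*pi \<le> 2*pi - D" using True ga gb by auto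
  have m1: "G D \<le> G (th - b)" using g1 mono by auto
  have m2: "G (th - b) \<le> G (th + b)" using ab mono by auto
  have m3: "G (th + b) \<le> G (th + a)" using ab mono by auto
  have m4: "G (th + a) \<le> G (th - a + 2*pi)" using ab mono by auto
  have m5: "G (th - a + 2*pi) \<le> G (2*pi - D)" using g1 mono by auto
  show ?thesis using True p m1 m2 m3 m4 m5 by simp
next
  case False
  then consider "a \<le> th" | "th \<le> b" by linarith
  then show ?thesis
  proof cases
    case 1
    have g1: "D \<le> th - a" "th + a \<le> 2*pi - D" using 1 ga th ab by auto
    have m1: "G D \<le> G (th - a)" using g1 mono by auto
    have m2: "G (th - a) \<le> G (th - b)" using ab mono by auto
    have m3: "G (th - b) \<le> G (th + b)" using ab mono by auto
    have m4: "G (th + b) \<le> G (th + a)" using ab mono by auto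
    have m5: "G (th + a) \<le> G (2*pi - D)" using g1 mono by auto
    show ?thesis using 1 False m1 m2 m3 m4 m5 by simp
  next
    case 2
    have p1: "G (th - a + 2*pi) = G (th - a) + 1" by (rule per)
    have p2: "G (th - b + 2*pi) = G (th - b) + 1" by (rule per)
    have g1: "D \<le> th + b" "th - b + 2*pi \<le> 2*pi - D" using 2 gb th ab by auto
    have m1: "G D \<le> G (th + b)" using g1 mono by auto
    have m2: "G (th + b) \<le> G (th + a)" using ab mono by auto
    have m3: "G (th + a) \<le> G (th - a + 2*pi)" using ab mono by auto
    have m4: "G (th - a + 2*pi) \<le> G (th - b + 2*pi)" using ab mono by auto
    have m5: "G (th - b + 2*pi) \<le> G (2*pi - D)" using g1 mono by auto
    show ?thesis using 2 False p1 p2 m1 m2 m3 m4 m5 by simp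
  qed
qed

lemma Gf_sym: "Gf d (2*pi - D) - Gf d D = 1 - 2 * Gf d D"
proof -
  have "Gf d (2*pi - D) = Gf d (-D + 2*pi)" by (simp add: algebra_simps)
  also have "\<dots> = 1 - Gf d D" unfolding Gf_periodic Gf_odd by simp
  finally show ?thesis by simp
qed

fun cheb :: "nat \<Rightarrow> real \<Rightarrow> real" where
  "cheb 0 x = 1"
| "cheb (Suc 0) x = x"
| "cheb (Suc (Suc k)) x = 2 * x * cheb (Suc k) x - cheb k x"

lemma cheb_cos2: "cheb j (cos t) = cos (real j * t) \<and> cheb (Suc j) (cos t) = cos (real (Suc j) * t)"
proof (induction j)
  case 0 then show ?case by simp
next
  case (Suc k)
  have "cos ((real k + 1) * t + t) + cos ((real k + 1) * t - t) = 2 * cos ((real k + 1) * t) * cos t"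
    by (simp add: cos_add cos_diff)
  moreover have "(real k + 1) * t + t = real (Suc (Suc k)) * t" by (simp add: algebra_simps)
  moreover have "(real k + 1) * t - t = real k * t" by (simp add: algebra_simps)
  ultimately have "cheb (Suc (Suc k)) (cos t) = cos (real (Suc (Suc k)) * t)"
    using Suc by (simp add: algebra_simps)
  then show ?case using Suc by simp
qed

lemma cheb_cos: "cheb j (cos t) = cos (real j * t)"
  using cheb_cos2 by blast

lemma Gf_alt: "Gf d x = rho 0 d * x / (2*pi) + (\<Sum>j=1..d. 2 * rho j d * sin (real j * x) / real j / (2*pi))"
  unfolding Gf_def by (simp add: add_divide_distrib sum_divide_distrib sum_distrib_left mult.assoc)

lemma psi_G:
  "(\<Sum>j=0..d. rho j d * eta cmin cmax j * cos (real j * th))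
   = Gf d (th + alpha cmin) - Gf d (th - alpha cmin) - Gf d (th + beta cmax) + Gf d (th - beta cmax)"
proof -
  define a where "a = alpha cmin"
  define b where "b = beta cmax"
  have rhs: "Gf d (th + a) - Gf d (th - a) - Gf d (th + b) + Gf d (th - b)
     = rho 0 d * ((th + a) - (th - a) - (th + b) + (th - b)) / (2*pi)
       + (\<Sum>j=1..d. 2 * rho j d * (sin (real j * (th + a)) - sin (real j * (th - a)) - sin (real j * (th + b)) + sin (real j * (th - b))) / real j / (2*pi))"
    unfolding Gf_alt by (simp add: sum.distrib[symmetric] sum_subtractf[symmetric] algebra_simps add_divide_distrib diff_divide_distrib)
  have lhs: "(\<Sum>j=0..d. rho j d * eta cmin cmax j * cos (real j * th))
     = rho 0 d * ((a - b) / pi) + (\<Sum>j=1..d. rho j d * eta cmin cmax j * cos (real j * th))"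
    by (simp add: sum.atLeast_Suc_atMost eta_def a_def b_def)
  have terms: "(\<Sum>j=1..d. rho j d * eta cmin cmax j * cos (real j * th))
     = (\<Sum>j=1..d. 2 * rho j d * (sin (real j * (th + a)) - sin (real j * (th - a)) - sin (real j * (th + b)) + sin (real j * (th - b))) / real j / (2*pi))"
  proof (rule sum.cong[OF refl])
    fix j assume "j \<in> {1..d}" then have j0: "j \<noteq> 0" by auto
    have e: "sin (real j * (th + a)) - sin (real j * (th - a)) - sin (real j * (th + b)) + sin (real j * (th - b))
       = 2 * cos (real j * th) * (sin (real j * a) - sin (real j * b))"
      by (simp add: distrib_left right_diff_distrib sin_add sin_diff algebra_simps)
    show "rho j d * eta cmin cmax j * cos (real j * th)
       = 2 * rho j d * (sin (real j * (th + a)) - sin (real j * (th - a)) - sin (real j * (th + b)) + sin (real j * (th - b))) / real j / (2*pi)"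
      unfolding e eta_def a_def[symmetric] b_def[symmetric] using j0 by (simp add: field_simps)
  qed
  show ?thesis unfolding a_def[symmetric] b_def[symmetric] lhs rhs terms by (simp add: field_simps)
qed



definition diagm :: "('n::finite \<Rightarrow> real) \<Rightarrow> real^'n^'n" where
  "diagm f = (\<chi> i j. if i = j then f i else 0)"

lemma diagm_mult: "diagm f ** diagm g = diagm (\<lambda>i. f i * g i)"
proof -
  have "\<And>i j k. (if i = k then f i else 0) * (if k = j then g k else 0) = (if k = i then (if i = j then f i * g i else 0) else (0::real))"
    by auto
  then show ?thesis unfolding diagm_def by (simp add: vec_eq_iff matrix_matrix_mult_def)
qed

lemma diagm_one: "mat 1 = diagm (\<lambda>i. 1)"
  unfolding diagm_def mat_def by simp

lemma diagm_scale: "r *\<^sub>R diagm f = diagm (\<lambda>i. r * f i)"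
  unfolding diagm_def by (simp add: vec_eq_iff)

lemma diagm_diff: "diagm f - diagm g = diagm (\<lambda>i. f i - g i)"
  unfolding diagm_def by (simp add: vec_eq_iff)

lemma trace_diagm: "trace (diagm f) = (\<Sum>i\<in>UNIV. f i)"
  unfolding diagm_def trace_def by simp

lemma mat_mult_diff_left: "(A::real^'n^'m) ** (B - C) = A ** B - A ** C"
  by (simp add: vec_eq_iff matrix_matrix_mult_def right_diff_distrib sum_subtractf)

lemma mat_mult_diff_right: "((B::real^'n^'m) - C) ** A = B ** A - C ** A"
  by (simp add: vec_eq_iff matrix_matrix_mult_def left_diff_distrib sum_subtractf)

lemma mat_mult_add_right: "((B::real^'n^'m) + C) ** A = B ** A + C ** A"
  by (simp add: vec_eq_iff matrix_matrix_mult_def distrib_right sum.distrib)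

lemma trace_scaleR: "trace (r *\<^sub>R (A::real^'n^'n)) = r * trace A"
  unfolding trace_def by (simp add: sum_distrib_left)

lemma trace_sum: "finite S \<Longrightarrow> trace (\<Sum>i\<in>S. (F i::real^'n^'n)) = (\<Sum>i\<in>S. trace (F i))"
  by (induction S rule: finite_induct) (auto simp: trace_add trace_0[unfolded mat_0])

lemma cheb_mat_diag: "cheb_mat j (diagm f) = diagm (\<lambda>i. cheb j (f i))"
proof -
  have "cheb_mat j (diagm f) = diagm (\<lambda>i. cheb j (f i)) \<and> cheb_mat (Suc j) (diagm f) = diagm (\<lambda>i. cheb (Suc j) (f i))"
  proof (induction j)
    case 0 then show ?case by (simp add: diagm_one)
  next
    case (Suc k)
    then show ?case by (simp add: diagm_mult diagm_scale diagm_diff mult.assoc)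
  qed
  then show ?thesis by blast
qed

lemma sc1: "(A::real^'n^'m) ** (r *\<^sub>R B) = r *\<^sub>R (A ** B)"
  by (simp add: vec_eq_iff matrix_matrix_mult_def sum_distrib_left mult.left_commute)

lemma sc2: "(r *\<^sub>R (A::real^'n^'m)) ** B = r *\<^sub>R (A ** B)"
  by (simp add: vec_eq_iff matrix_matrix_mult_def sum_distrib_left mult.assoc)

lemma cheb_mat_sim:
  fixes X Y D :: "real^'n^'n"
  assumes YX: "Y ** X = mat 1"
  shows "cheb_mat j (X ** D ** Y) = X ** cheb_mat j D ** Y"
proof -
  have XY: "X ** Y = mat 1" using YX matrix_left_right_inverse[of Y X] by simp
  have "cheb_mat j (X ** D ** Y) = X ** cheb_mat j D ** Y \<and> cheb_mat (Suc j) (X ** D ** Y) = X ** cheb_mat (Suc j) D ** Y"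
  proof (induction j)
    case 0 then show ?case by (simp add: matrix_mul_assoc XY)
  next
    case (Suc k)
    have "cheb_mat (Suc (Suc k)) (X ** D ** Y) = 2 *\<^sub>R ((X ** D ** Y) ** (X ** cheb_mat (Suc k) D ** Y)) - X ** cheb_mat k D ** Y"
      using Suc by simp
    also have "(X ** D ** Y) ** (X ** cheb_mat (Suc k) D ** Y) = X ** D ** (Y ** X) ** cheb_mat (Suc k) D ** Y"
      by (simp only: matrix_mul_assoc)
    also have "\<dots> = X ** (D ** cheb_mat (Suc k) D) ** Y"
      unfolding YX matrix_mul_rid by (simp only: matrix_mul_assoc)
    finally have "cheb_mat (Suc (Suc k)) (X ** D ** Y) = 2 *\<^sub>R (X ** (D ** cheb_mat (Suc k) D) ** Y) - X ** cheb_mat k D ** Y" .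
    also have "\<dots> = X ** (2 *\<^sub>R (D ** cheb_mat (Suc k) D) - cheb_mat k D) ** Y"
      by (simp only: mat_mult_diff_left mat_mult_diff_right sc1 sc2)
    finally have "cheb_mat (Suc (Suc k)) (X ** D ** Y) = X ** cheb_mat (Suc (Suc k)) D ** Y" by simp
    then show ?case using Suc by simp
  qed
  then show ?thesis by blast
qed

lemma trace_sim: assumes YX: "Y ** X = mat 1" shows "trace (X ** M ** Y) = trace (M::real^'n^'n)"
proof -
  have "trace (X ** M ** Y) = trace (Y ** (X ** M))" by (rule trace_mul_sym)
  also have "\<dots> = trace M" by (simp add: matrix_mul_assoc YX)
  finally show ?thesis .
qed

lemma trace_outer: "trace (outer (column i X) ** H) = (transpose X ** H ** X) $ i $ i"
proof -
  have l: "trace (outer (column i X) ** H) = (\<Sum>a\<in>UNIV. \<Sum>b\<in>UNIV. X$a$i * X$b$i * H$b$a)"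
    unfolding trace_def outer_def matrix_matrix_mult_def column_def by simp
  have r: "(transpose X ** H ** X) $ i $ i = (\<Sum>a\<in>UNIV. \<Sum>b\<in>UNIV. X$b$i * H$b$a * X$a$i)"
    unfolding matrix_matrix_mult_def transpose_def by (simp add: sum_distrib_right)
  have e: "\<And>a b. X$a$i * X$b$i * H$b$a = X$b$i * H$b$a * X$a$i" by (simp only: mult_ac)
  show ?thesis unfolding l r e ..
qed



definition thf :: "real \<Rightarrow> real" where "thf v = arccos (lmap v)"

lemma lmap_bounds: "0 \<le> v \<Longrightarrow> v \<le> 1 \<Longrightarrow> -1 \<le> lmap v \<and> lmap v \<le> 1"
proof -
  assume v: "0 \<le> v" "v \<le> 1"
  then have "v^2 \<le> 1" by (simp add: power_le_one)
  then show ?thesis unfolding lmap_def by simp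
qed

lemma lmap_less: "0 \<le> v \<Longrightarrow> 0 \<le> w \<Longrightarrow> lmap v < lmap w \<longleftrightarrow> v < w"
  unfolding lmap_def using power_less_imp_less_base[of v 2 w] power_strict_mono[of v w 2] by auto

lemma thf_less: assumes "0 \<le> v" "v \<le> 1" "0 \<le> w" "w \<le> 1" shows "thf v < thf w \<longleftrightarrow> w < v"
proof -
  have "\<bar>lmap v\<bar> \<le> 1" "\<bar>lmap w\<bar> \<le> 1" using lmap_bounds assms by (auto simp: abs_le_iff)
  then show ?thesis unfolding thf_def using arccos_less_mono lmap_less assms by simp
qed

lemma thf_le: assumes "0 \<le> v" "v \<le> 1" "0 \<le> w" "w \<le> 1" shows "thf v \<le> thf w \<longleftrightarrow> w \<le> v"
  using thf_less[OF assms] thf_less[OF assms(3,4,1,2)] by linarith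

lemma thf_range: "0 \<le> v \<Longrightarrow> v \<le> 1 \<Longrightarrow> 0 \<le> thf v \<and> thf v \<le> pi"
  unfolding thf_def using lmap_bounds arccos_bounded by blast

lemma delta_gap:
  fixes c :: "'n::finite \<Rightarrow> real"
  assumes c01: "\<And>i. 0 \<le> c i \<and> c i \<le> 1" and iv: "0 \<le> cmin" "cmin \<le> cmax" "cmax \<le> 1"
  shows "delta_min c cmin cmax \<le> \<bar>thf (c i) - thf cmin\<bar> \<and> delta_min c cmin cmax \<le> \<bar>thf (c i) - thf cmax\<bar>"
proof -
  define I where "I = {v \<in> range c. cmin \<le> v \<and> v \<le> cmax}"
  define L where "L = {v \<in> range c. v < cmin}"
  define R where "R = {v \<in> range c. cmax < v}"
  define DS where "DS = delta_set c cmin cmax"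
  have DS: "DS = (if I \<noteq> {} then {\<bar>arccos (lmap (Min I)) - alpha cmin\<bar>, \<bar>arccos (lmap (Max I)) - beta cmax\<bar>} else {})
         \<union> (if L \<noteq> {} then {\<bar>arccos (lmap (Max L)) - alpha cmin\<bar>} else {})
         \<union> (if R \<noteq> {} then {\<bar>arccos (lmap (Min R)) - beta cmax\<bar>} else {})"
    unfolding DS_def delta_set_def Let_def I_def L_def R_def by simp
  have fin: "finite DS" unfolding DS by simp
  have dm: "\<And>x. x \<in> DS \<Longrightarrow> delta_min c cmin cmax \<le> x" unfolding delta_min_def DS_def[symmetric] using fin by simp
  have fI: "finite I" "finite L" "finite R" unfolding I_def L_def R_def by auto
  have ab: "alpha cmin = thf cmin" "beta cmax = thf cmax" unfolding alpha_def beta_def thf_def by auto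
  have ci: "0 \<le> c i" "c i \<le> 1" using c01 by auto
  have cab: "thf cmax \<le> thf cmin" using thf_le iv by simp
  consider "c i \<in> I" | "c i \<in> L" | "c i \<in> R" unfolding I_def L_def R_def by force
  then show ?thesis
  proof cases
    case 1
    then have ne: "I \<noteq> {}" by auto
    have mi: "Min I \<in> I" "Max I \<in> I" using fI ne by auto
    have le: "Min I \<le> c i" "c i \<le> Max I" using fI 1 by auto
    have r1: "cmin \<le> Min I" "Min I \<le> 1" "Max I \<le> cmax" "0 \<le> Max I" using mi iv unfolding I_def by auto
    have x1: "\<bar>thf (Min I) - thf cmin\<bar> \<in> DS" using ne unfolding DS by (simp add: thf_def alpha_def beta_def)
    have x2: "\<bar>thf (Max I) - thf cmax\<bar> \<in> DS" using ne unfolding DS by (simp add: thf_def alpha_def beta_def)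
    have t1: "thf (Min I) \<le> thf cmin" using thf_le r1 iv by simp
    have t2: "thf (c i) \<le> thf (Min I)" using thf_le r1 iv le ci by simp
    have t3: "thf (Max I) \<le> thf (c i)" using thf_le r1 iv le ci by simp
    have t4: "thf cmax \<le> thf (Max I)" using thf_le r1 iv by simp
    show ?thesis using dm[OF x1] dm[OF x2] t1 t2 t3 t4 by auto
  next
    case 2
    then have ne: "L \<noteq> {}" by auto
    have mi: "Max L \<in> L" using fI ne by auto
    have le: "c i \<le> Max L" using fI 2 by auto
    have r1: "Max L < cmin" "0 \<le> Max L" using mi c01 unfolding L_def by auto
    have x1: "\<bar>thf (Max L) - thf cmin\<bar> \<in> DS" using ne unfolding DS by (simp add: thf_def alpha_def beta_def)
    have t1: "thf cmin \<le> thf (Max L)" using thf_le r1 iv by simp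
    have t2: "thf (Max L) \<le> thf (c i)" using thf_le r1 iv le ci by simp
    show ?thesis using dm[OF x1] t1 t2 cab by auto
  next
    case 3
    then have ne: "R \<noteq> {}" by auto
    have mi: "Min R \<in> R" using fI ne by auto
    have le: "Min R \<le> c i" using fI 3 by auto
    have r1: "cmax < Min R" "Min R \<le> 1" using mi c01 unfolding R_def by auto
    have x1: "\<bar>thf (Min R) - thf cmax\<bar> \<in> DS" using ne unfolding DS by (simp add: thf_def alpha_def beta_def)
    have t1: "thf (Min R) \<le> thf cmax" using thf_le r1 iv by simp
    have t2: "thf (c i) \<le> thf (Min R)" using thf_le r1 iv le ci by simp
    show ?thesis using dm[OF x1] t1 t2 cab by auto
  qed
qed



lemma diagm_add: "diagm f + diagm g = diagm (\<lambda>i. f i + g i)"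
  unfolding diagm_def by (simp add: vec_eq_iff)

theorem theorem3p4:
  fixes A :: "real^'n^'m1" and B :: "real^'n^'m2"
    and U :: "real^'m1^'m1" and V :: "real^'m2^'m2" and X :: "real^'n^'n"
    and SigA :: "real^'n^'m1" and SigB :: "real^'n^'m2"
    and c s :: "'n \<Rightarrow> real" and cmin cmax :: real and d :: nat
  assumes dims: "CARD('m1) + CARD('m2) \<ge> CARD('n)"
    and fullrank: "\<forall>x. A *v x = 0 \<and> B *v x = 0 \<longrightarrow> x = 0"
    and U_orth: "orthogonal_matrix U" and V_orth: "orthogonal_matrix V"
    and X_inv: "invertible X"
    and gsvdA: "transpose U ** A ** X = SigA"
    and gsvdB: "transpose V ** B ** X = SigB"
    and SigA_diag: "transpose SigA ** SigA = (\<chi> i j. if i = j then (c i)^2 else 0)"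
    and SigB_diag: "transpose SigB ** SigB = (\<chi> i j. if i = j then (s i)^2 else 0)"
    and cs_nonneg: "\<forall>i. c i \<ge> 0 \<and> s i \<ge> 0"
    and cs_sum: "\<forall>i. (c i)^2 + (s i)^2 = 1"
    and interval: "0 \<le> cmin" "cmin \<le> cmax" "cmax \<le> 1"
    and gap_pos: "delta_min c cmin cmax > 0"
  shows
    "let H = transpose A ** A + transpose B ** B;
         S = matrix_inv H ** (transpose A ** A - transpose B ** B);
         PS = PS_mat X H c cmin cmax;
         P = psi_mat cmin cmax d S
     in \<bar>trace PS - trace P\<bar>
          \<le> real CARD('n) * pi^6 / (2 * (real d + 2)^3 * (delta_min c cmin cmax)^4)"
proof -
  define AA where "AA = transpose A ** A"
  define BB where "BB = transpose B ** B"
  define H where "H = AA + BB"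
  define S where "S = matrix_inv H ** (AA - BB)"
  define Dc where "Dc = diagm (\<lambda>i. (c i)^2)"
  define Ds where "Ds = diagm (\<lambda>i. (s i)^2)"
  define Y where "Y = matrix_inv X"
  define Bd where "Bd = pi^6 / (2 * (real d + 2)^3 * (delta_min c cmin cmax)^4)"
  have U1: "U ** transpose U = mat 1" using U_orth orthogonal_matrix_def by blast
  have V1: "V ** transpose V = mat 1" using V_orth orthogonal_matrix_def by blast
  have XA: "transpose X ** AA ** X = Dc"
  proof -
    have "transpose SigA ** SigA = (transpose X ** transpose A ** U) ** (transpose U ** A ** X)"
      unfolding gsvdA[symmetric] by (simp add: matrix_transpose_mul matrix_mul_assoc)
    also have "\<dots> = transpose X ** transpose A ** (U ** transpose U) ** A ** X" by (simp only: matrix_mul_assoc)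
    also have "\<dots> = transpose X ** AA ** X" unfolding U1 AA_def by (simp add: matrix_mul_assoc)
    finally show ?thesis using SigA_diag unfolding Dc_def diagm_def by simp
  qed
  have XB: "transpose X ** BB ** X = Ds"
  proof -
    have "transpose SigB ** SigB = (transpose X ** transpose B ** V) ** (transpose V ** B ** X)"
      unfolding gsvdB[symmetric] by (simp add: matrix_transpose_mul matrix_mul_assoc)
    also have "\<dots> = transpose X ** transpose B ** (V ** transpose V) ** B ** X" by (simp only: matrix_mul_assoc)
    also have "\<dots> = transpose X ** BB ** X" unfolding V1 BB_def by (simp add: matrix_mul_assoc)
    finally show ?thesis using SigB_diag unfolding Ds_def diagm_def by simp
  qed
  have XHX: "transpose X ** H ** X = mat 1"
  proof -
    have "transpose X ** H ** X = Dc + Ds" unfolding H_def XA[symmetric] XB[symmetric]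
      by (simp add: matrix_add_ldistrib mat_mult_add_right)
    also have "\<dots> = mat 1" unfolding Dc_def Ds_def diagm_add diagm_one using cs_sum by simp
    finally show ?thesis .
  qed
  have XY: "X ** Y = mat 1" and YX: "Y ** X = mat 1"
  proof -
    obtain X' where "X ** X' = mat 1 \<and> X' ** X = mat 1" using X_inv invertible_def by blast
    then have "X ** Y = mat 1 \<and> Y ** X = mat 1" unfolding Y_def matrix_inv_def by (rule someI)
    then show "X ** Y = mat 1" "Y ** X = mat 1" by auto
  qed
  have tXY: "transpose Y ** transpose X = mat 1" using XY by (metis matrix_transpose_mul transpose_mat)
  have tYX: "transpose X ** transpose Y = mat 1" using YX by (metis matrix_transpose_mul transpose_mat)
  have HX: "H ** X = transpose Y"
  proof -
    have "transpose Y = transpose Y ** (transpose X ** H ** X)" unfolding XHX by simp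
    also have "\<dots> = (transpose Y ** transpose X) ** H ** X" by (simp add: matrix_mul_assoc)
    finally show ?thesis unfolding tXY by simp
  qed
  have tadd: "\<And>P Q :: real^'n^'n. transpose (P + Q) = transpose P + transpose Q"
    by (simp add: vec_eq_iff transpose_def)
  have Hsym: "transpose H = H" unfolding H_def AA_def BB_def tadd
    by (simp add: matrix_transpose_mul)
  have XtH: "transpose X ** H = Y"
  proof -
    have "transpose (H ** X) = transpose X ** H" using Hsym by (simp add: matrix_transpose_mul)
    then show ?thesis unfolding HX by simp
  qed
  define W where "W = X ** transpose X"
  have HW: "H ** W = mat 1" unfolding W_def by (simp add: matrix_mul_assoc HX tXY)
  have WH: "W ** H = mat 1" unfolding W_def by (simp add: matrix_mul_assoc[symmetric] XtH XY)
  have invH: "matrix_inv H = W"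
    unfolding matrix_inv_def
  proof (rule some_equality)
    show "H ** W = mat 1 \<and> W ** H = mat 1" using HW WH by simp
  next
    fix B' assume "H ** B' = mat 1 \<and> B' ** H = mat 1"
    then have "B' ** H = mat 1" by simp
    then have BH: "B' ** H = mat 1" by simp
    have "B' = B' ** (H ** W)" using HW by simp
    also have "\<dots> = (B' ** H) ** W" by (simp only: matrix_mul_assoc)
    also have "\<dots> = W" using BH by simp
    finally show "B' = W" .
  qed
  have AAe: "AA = transpose Y ** Dc ** Y"
  proof -
    have "transpose Y ** Dc ** Y = (transpose Y ** transpose X) ** AA ** (X ** Y)"
      unfolding XA[symmetric] by (simp add: matrix_mul_assoc)
    then show ?thesis unfolding tXY XY by simp
  qed
  have BBe: "BB = transpose Y ** Ds ** Y"
  proof -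
    have "transpose Y ** Ds ** Y = (transpose Y ** transpose X) ** BB ** (X ** Y)"
      unfolding XB[symmetric] by (simp add: matrix_mul_assoc)
    then show ?thesis unfolding tXY XY by simp
  qed
  define Dl where "Dl = diagm (\<lambda>i. lmap (c i))"
  have Se: "S = X ** Dl ** Y"
  proof -
    have "S = X ** transpose X ** (transpose Y ** Dc ** Y - transpose Y ** Ds ** Y)"
      unfolding S_def invH W_def AAe[symmetric] BBe[symmetric] ..
    also have "\<dots> = X ** (transpose X ** transpose Y) ** (Dc - Ds) ** Y"
      by (simp add: mat_mult_diff_left mat_mult_diff_right matrix_mul_assoc)
    also have "Dc - Ds = Dl" unfolding Dc_def Ds_def Dl_def diagm_diff lmap_def
    proof -
      have fe: "(\<lambda>i. (c i)^2 - (s i)^2) = (\<lambda>i. 2 * (c i)^2 - 1)"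
      proof (rule ext)
        fix i have "(c i)^2 + (s i)^2 = 1" using cs_sum by blast
        then show "(c i)^2 - (s i)^2 = 2 * (c i)^2 - 1" by linarith
      qed
      show "diagm (\<lambda>i. (c i)\<^sup>2 - (s i)\<^sup>2) = diagm (\<lambda>i. 2 * (c i)\<^sup>2 - 1)" unfolding fe ..
    qed
    finally show ?thesis unfolding tYX by simp
  qed
  define psi where "psi = (\<lambda>x. \<Sum>j=0..d. rho j d * eta cmin cmax j * cheb j x)"
  define f where "f = (\<lambda>i. if cmin < c i \<and> c i < cmax then (1::real) else 0)"
  have c01: "\<And>i. 0 \<le> c i \<and> c i \<le> 1"
  proof -
    fix i
    have "(c i)^2 \<le> 1" using cs_sum by (metis le_add_same_cancel1 zero_le_power2)
    then show "0 \<le> c i \<and> c i \<le> 1" using cs_nonneg by (simp add: power_le_one_iff abs_le_iff)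
  qed
  have trP: "trace (psi_mat cmin cmax d S) = (\<Sum>i\<in>UNIV. psi (lmap (c i)))"
  proof -
    have "trace (psi_mat cmin cmax d S) = (\<Sum>j=0..d. rho j d * eta cmin cmax j * trace (cheb_mat j S))"
      unfolding psi_mat_def by (simp add: trace_sum trace_scaleR)
    also have "\<dots> = (\<Sum>j=0..d. rho j d * eta cmin cmax j * (\<Sum>i\<in>UNIV. cheb j (lmap (c i))))"
      unfolding Se cheb_mat_sim[OF YX] trace_sim[OF YX] Dl_def cheb_mat_diag trace_diagm ..
    also have "\<dots> = (\<Sum>i\<in>UNIV. psi (lmap (c i)))"
      unfolding psi_def by (simp add: sum_distrib_left) (rule sum.swap)
    finally show ?thesis .
  qed
  have noE: "{i. c i = cmin \<or> c i = cmax} = {}"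
  proof -
    { fix i assume ce: "c i = cmin \<or> c i = cmax"
      have g: "delta_min c cmin cmax \<le> \<bar>thf (c i) - thf cmin\<bar> \<and> delta_min c cmin cmax \<le> \<bar>thf (c i) - thf cmax\<bar>"
        by (rule delta_gap[where c=c and cmin=cmin and cmax=cmax and i=i, OF c01 interval])
      then have False using ce gap_pos by auto }
    then show ?thesis by auto
  qed
  have trPS: "trace (PS_mat X H c cmin cmax) = (\<Sum>i\<in>UNIV. f i)"
  proof -
    have "trace (PS_mat X H c cmin cmax) = (\<Sum>i\<in>{i. cmin < c i \<and> c i < cmax}. 1)"
      unfolding PS_mat_def noE by (simp add: trace_add trace_sum trace_outer XHX mat_def)
    also have "\<dots> = (\<Sum>i\<in>UNIV. f i)" unfolding f_def by (simp add: sum.If_cases)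
    finally show ?thesis .
  qed
  have pt: "\<And>i. \<bar>f i - psi (lmap (c i))\<bar> \<le> Bd"
  proof -
    fix i
    define th where "th = thf (c i)"
    define a where "a = alpha cmin"
    define b where "b = beta cmax"
    define Dm where "Dm = delta_min c cmin cmax"
    have ci: "0 \<le> c i" "c i \<le> 1" using c01 by auto
    have ath: "a = thf cmin" "b = thf cmax" unfolding a_def b_def alpha_def beta_def thf_def by auto
    have th_r: "0 \<le> th" "th \<le> pi" using thf_range ci th_def by auto
    have a_r: "0 \<le> a" "a \<le> pi" using thf_range interval ath by auto
    have b_r: "0 \<le> b" "b \<le> a" using thf_range thf_le interval ath by auto
    have g: "Dm \<le> \<bar>th - a\<bar>" "Dm \<le> \<bar>th - b\<bar>"
      using delta_gap[where c=c and cmin=cmin and cmax=cmax and i=i, OF c01 interval] unfolding Dm_def th_def ath by auto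
    have D0: "0 < Dm" using gap_pos Dm_def by simp
    have Dpi: "Dm \<le> pi" using g(1) th_r a_r by linarith
    have cth: "cos th = lmap (c i)" unfolding th_def thf_def using lmap_bounds ci by simp
    have psiF: "psi (lmap (c i)) = Gf d (th + a) - Gf d (th - a) - Gf d (th + b) + Gf d (th - b)"
      unfolding psi_def cth[symmetric] cheb_cos a_def b_def by (rule psi_G)
    have fF: "f i = (if b < th \<and> th < a then 1 else 0)"
    proof -
      have "cmin < c i \<longleftrightarrow> th < a" unfolding th_def ath using thf_less ci interval by simp
      moreover have "c i < cmax \<longleftrightarrow> b < th" unfolding th_def ath using thf_less ci interval by simp
      ultimately show ?thesis unfolding f_def by auto
    qed
    have "\<bar>f i - psi (lmap (c i))\<bar> \<le> Gf d (2*pi - Dm) - Gf d Dm"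
      unfolding fF psiF
      by (rule point_err[where G="Gf d", OF Gf_mono Gf_periodic th_r b_r a_r(2) D0 g])
    also have "\<dots> = 1 - 2 * Gf d Dm" by (rule Gf_sym)
    also have "\<dots> \<le> Bd" unfolding Bd_def Dm_def[symmetric] by (rule tail_bound[OF D0 Dpi])
    finally show "\<bar>f i - psi (lmap (c i))\<bar> \<le> Bd" .
  qed
  have "\<bar>trace (PS_mat X H c cmin cmax) - trace (psi_mat cmin cmax d S)\<bar> = \<bar>\<Sum>i\<in>UNIV. f i - psi (lmap (c i))\<bar>"
    unfolding trPS trP by (simp add: sum_subtractf)
  also have "\<dots> \<le> (\<Sum>i\<in>UNIV. \<bar>f i - psi (lmap (c i))\<bar>)" by (rule sum_abs)
  also have "\<dots> \<le> (\<Sum>i\<in>(UNIV::'n set). Bd)" using pt by (intro sum_mono) auto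
  also have "\<dots> = real CARD('n) * Bd" by simp
  finally have main: "\<bar>trace (PS_mat X H c cmin cmax) - trace (psi_mat cmin cmax d S)\<bar> \<le> real CARD('n) * Bd" .
  show ?thesis unfolding Let_def H_def[symmetric] AA_def[symmetric] BB_def[symmetric] S_def[symmetric]
    using main unfolding Bd_def by simp
qed


end
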